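(* Let $Q$ be a QNP. If a policy $\pi$ solves the FOND problem $P=T(Q)$ (i.e. is a strong cyclic solution of it), then the controller $\pi_M$ solves $Q$.
   Context: QNPs: $Q=\langle F,V,I,O,G\rangle$ with propositional variables $F$, numerical variables $V$ (non-negative reals), literals $p,\neg p$, $X=0$, $X>0$; actions with precondition $Pre(a)$, propositional effects $\mathit{Eff}(a)$, numerical effects $N(a)\subseteq\{Inc(X),Dec(X)\}$ (at most one per variable; $Dec(X)\in N(a)$ implies $X>0\in Pre(a)$). A state $s$ assigns truth values to $F$ and reals $\ge0$ to $V$; initial states satisfy $I$ (closed world); goal states satisfy $G$; for applicable $a$, $s'\in F_Q(a,s)$ iff $s'$ applies the propositional effects, $s'[X]>s[X]$ for $Inc(X)$, $s'[X]<s[X]$ for $Dec(X)$, rest unchanged. The boolean state $\bar s$ is the truth valuation of $s$ on atoms $p\in F$ and $X=0$. The FOND problem $T(Q)$: $n=|F|+|V|$, $Max=1+2^n$. Propositional variables: $F$, $p_{X=0}$ ($X\in V$; $X=0$/$X>0$ denote $p_{X=0}$/$\neg p_{X=0}$) — these make up the boolean states of $Q$ — and the memory atoms $in(X)$, $depth(d)$ ($0\le d\le|V|$), $index(X,d)$ ($1\le d\le|V|$), counters $c(d)$ ($0\le d\le|V|$), $c_T$ over $\{0,\dots,Max\}$ encoded in binary. Initial state: $I$ plus $depth(0)$, counters $0$, other memory atoms false; goal $G$. Actions: $Push(X,d)$ ($0\le d<|V|$): pre $\neg in(X),depth(d),c(d)<Max$; eff $in(X),index(X,d+1),depth(d+1),\neg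 depth(d),c(d):=c(d)+1,c(d+1):=0$. $Pop(X,d)$ ($1\le d\le|V|$): pre $in(X),index(X,d),depth(d)$; eff $\neg in(X),\neg index(X,d),\neg depth(d),depth(d-1)$. $Move$: pre $depth(0),c_T<Max$; eff $c_T:=c_T+1$. For $a\in O$ with no $Dec$ effect: action $a$ with pre $Pre(a)$ plus $\neg in(Y)$ for each $Inc(Y)\in N(a)$, eff $\mathit{Eff}(a)$ plus $Y>0$ for each $Inc(Y)\in N(a)$. For $a$ with a $Dec$ effect, $X$ with $Dec(X)\in N(a)$, $1\le d\le|V|$: action $a(X,d)$ with pre $Pre(a)$, $\neg in(Y)$ for $Inc(Y)\in N(a)$, $index(X,d)$; eff $\mathit{Eff}(a)$, $Y>0$ for $Inc(Y)\in N(a)$, nondeterministic $Z>0\mid Z=0$ for each $Dec(Z)\in N(a)$, $c(d'):=0$ for $d\le d'\le|V|$. A strong cyclic solution of a FOND problem is a policy such that from every state reachable from the initial state under $\pi$ some goal state is reachable under $\pi$. Controller $\pi_M$: a memory state $m$ is a valuation of the memory atoms, with $m_0$ the initial one; a state of $T(Q)$ is a pair $(\bar s,m)$. An execution of $\pi_M$ on $Q$ is a sequence of pairs $(s_i,m_i)$ with $s_0$ an initial state of $Q$ and $m_0$ the initial memory, where $b_i=\pi(\bar s_i,m_i)$ is defined and its preconditions hold in $(\bar s_i,m_i)$ (numerical literals evaluated in $s_i$), and: if $b_i$ is $Push$, $Pop$ or $Move$, then $s_{i+1}=s_i$ and $m_{i+1}$ results from $m_i$ by the effects of $b_i$; if $b_i$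 is $a$ or $a(X,d)$, then $s_{i+1}\in F_Q(a,s_i)$ and $m_{i+1}$ results from $m_i$ by the counter effects of $b_i$. For $\epsilon>0$ the execution is an $\epsilon$-execution if each change of a numerical variable has magnitude $\ge\epsilon$ unless it goes from a value $<\epsilon$ to $0$. It is maximal if infinite without goal, ending at its first pair with $s_i$ a goal state, or ending where $\pi$ is undefined or its action inapplicable. $\pi_M$ solves $Q$ iff for every $\epsilon>0$ every maximal $\epsilon$-execution reaches a pair whose $Q$-state is a goal state. *)

theory Defs
  imports Complex_Main
begin

text \<open>Atoms of boolean states: a propositional variable p, or the atom p_{X=0}.\<close>
datatype ('f, 'v) atom = PA 'f | ZA 'v

text \<open>A literal is an atom together with the required truth value.
  (PA p, True) = p, (PA p, False) = not p, (ZA X, True) = (X = 0), (ZA X, False) = (X > 0).\<close>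
type_synonym ('f, 'v) lit = "('f, 'v) atom \<times> bool"

type_synonym ('f, 'v) bstate = "('f, 'v) atom \<Rightarrow> bool"

definition lit_holds :: "('f, 'v) bstate \<Rightarrow> ('f, 'v) lit \<Rightarrow> bool" where
  "lit_holds b l = (b (fst l) = snd l)"

record ('f, 'v, 'a) qnp =
  QF   :: "'f set"
  QV   :: "'v set"
  QI   :: "('f, 'v) lit set"
  QO   :: "'a set"
  Qpre :: "'a \<Rightarrow> ('f, 'v) lit set"
  Qeff :: "'a \<Rightarrow> ('f \<times> bool) set"
  Qinc :: "'a \<Rightarrow> 'v set"
  Qdec :: "'a \<Rightarrow> 'v set"
  QG   :: "('f, 'v) lit set"

definition atom_in :: "('f, 'v, 'a) qnp \<Rightarrow> ('f, 'v) atom \<Rightarrow> bool" where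
  "atom_in Q z = (case z of PA p \<Rightarrow> p \<in> QF Q | ZA X \<Rightarrow> X \<in> QV Q)"

definition wf_qnp :: "('f, 'v, 'a) qnp \<Rightarrow> bool" where
  "wf_qnp Q \<longleftrightarrow> finite (QF Q) \<and> finite (QV Q)
     \<and> (\<forall>l \<in> QI Q \<union> QG Q. atom_in Q (fst l))
     \<and> (\<forall>a \<in> QO Q.
          (\<forall>l \<in> Qpre Q a. atom_in Q (fst l))
        \<and> (\<forall>e \<in> Qeff Q a. fst e \<in> QF Q)
        \<and> \<not> (\<exists>p. (p, True) \<in> Qeff Q a \<and> (p, False) \<in> Qeff Q a)
        \<and> Qinc Q a \<subseteq> QV Q \<and> Qdec Q a \<subseteq> QV Q
        \<and> Qinc Q a \<inter> Qdec Q a = {}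
        \<and> (\<forall>X \<in> Qdec Q a. (ZA X, False) \<in> Qpre Q a))"

record ('f, 'v) qstate =
  qb :: "'f \<Rightarrow> bool"
  qn :: "'v \<Rightarrow> real"

definition qstate_ok :: "('f, 'v) qstate \<Rightarrow> bool" where
  "qstate_ok s \<longleftrightarrow> (\<forall>X. 0 \<le> qn s X)"

definition bar :: "('f, 'v) qstate \<Rightarrow> ('f, 'v) bstate" where
  "bar s z = (case z of PA p \<Rightarrow> qb s p | ZA X \<Rightarrow> qn s X = 0)"

text \<open>Closed-world valuation of the initial literals.\<close>
definition init_b :: "('f, 'v, 'a) qnp \<Rightarrow> ('f, 'v) bstate" where
  "init_b Q z = ((z, True) \<in> QI Q)"

definition qinit :: "('f, 'v, 'a) qnp \<Rightarrow> ('f, 'v) qstate \<Rightarrow> bool" where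
  "qinit Q s \<longleftrightarrow> qstate_ok s \<and> bar s = init_b Q"

definition qgoal :: "('f, 'v, 'a) qnp \<Rightarrow> ('f, 'v) qstate \<Rightarrow> bool" where
  "qgoal Q s \<longleftrightarrow> (\<forall>l \<in> QG Q. lit_holds (bar s) l)"

definition apply_peff :: "('f \<times> bool) set \<Rightarrow> 'f \<Rightarrow> bool \<Rightarrow> bool" where
  "apply_peff E p old = (if (p, True) \<in> E then True else if (p, False) \<in> E then False else old)"

text \<open>Transition function F_Q(a, s) of the QNP (empty if a is not applicable).\<close>
definition qsucc :: "('f, 'v, 'a) qnp \<Rightarrow> 'a \<Rightarrow> ('f, 'v) qstate \<Rightarrow> ('f, 'v) qstate set" where
  "qsucc Q a s = {s'. a \<in> QO Q \<and> (\<forall>l \<in> Qpre Q a. lit_holds (bar s) l) \<and> qstate_ok s'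
      \<and> (\<forall>p. qb s' p = apply_peff (Qeff Q a) p (qb s p))
      \<and> (\<forall>X. (X \<in> Qinc Q a \<longrightarrow> qn s' X > qn s X)
            \<and> (X \<in> Qdec Q a \<longrightarrow> qn s' X < qn s X)
            \<and> (X \<notin> Qinc Q a \<and> X \<notin> Qdec Q a \<longrightarrow> qn s' X = qn s X))}"

section \<open>The FOND translation T(Q)\<close>

text \<open>Memory atoms: in(X), depth(d), index(X,d), counters c(d) and c_T
  (counters are represented by their numeric values in {0..Max}).\<close>
record 'v mem =
  m_in    :: "'v \<Rightarrow> bool"
  m_depth :: "nat \<Rightarrow> bool"
  m_index :: "'v \<Rightarrow> nat \<Rightarrow> bool"
  m_c     :: "nat \<Rightarrow> nat"
  m_cT    :: "nat"

definition m0 :: "'v mem" where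
  "m0 = \<lparr> m_in = (\<lambda>_. False), m_depth = (\<lambda>d. d = 0), m_index = (\<lambda>_ _. False),
          m_c = (\<lambda>_. 0), m_cT = 0 \<rparr>"

type_synonym ('f, 'v) tstate = "('f, 'v) bstate \<times> 'v mem"

datatype ('v, 'a) tact = Push 'v nat | Pop 'v nat | Move | Op 'a | OpDec 'a 'v nat

definition nV :: "('f, 'v, 'a) qnp \<Rightarrow> nat" where
  "nV Q = card (QV Q)"

definition Maxc :: "('f, 'v, 'a) qnp \<Rightarrow> nat" where
  "Maxc Q = 1 + 2 ^ (card (QF Q) + card (QV Q))"

definition tact_valid :: "('f, 'v, 'a) qnp \<Rightarrow> ('v, 'a) tact \<Rightarrow> bool" where
  "tact_valid Q b = (case b of
      Push X d \<Rightarrow> X \<in> QV Q \<and> d < nV Q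
    | Pop X d \<Rightarrow> X \<in> QV Q \<and> 1 \<le> d \<and> d \<le> nV Q
    | Move \<Rightarrow> True
    | Op a \<Rightarrow> a \<in> QO Q \<and> Qdec Q a = {}
    | OpDec a X d \<Rightarrow> a \<in> QO Q \<and> X \<in> Qdec Q a \<and> 1 \<le> d \<and> d \<le> nV Q)"

definition tpre :: "('f, 'v, 'a) qnp \<Rightarrow> ('v, 'a) tact \<Rightarrow> ('f, 'v) tstate \<Rightarrow> bool" where
  "tpre Q b t = (let bs = fst t; m = snd t in case b of
      Push X d \<Rightarrow> \<not> m_in m X \<and> m_depth m d \<and> m_c m d < Maxc Q
    | Pop X d \<Rightarrow> m_in m X \<and> m_index m X d \<and> m_depth m d
    | Move \<Rightarrow> m_depth m 0 \<and> m_cT m < Maxc Q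
    | Op a \<Rightarrow> (\<forall>l \<in> Qpre Q a. lit_holds bs l) \<and> (\<forall>Y \<in> Qinc Q a. \<not> m_in m Y)
    | OpDec a X d \<Rightarrow> (\<forall>l \<in> Qpre Q a. lit_holds bs l) \<and> (\<forall>Y \<in> Qinc Q a. \<not> m_in m Y)
                     \<and> m_index m X d)"

definition mem_eff :: "('f, 'v, 'a) qnp \<Rightarrow> ('v, 'a) tact \<Rightarrow> 'v mem \<Rightarrow> 'v mem" where
  "mem_eff Q b m = (case b of
      Push X d \<Rightarrow> m\<lparr> m_in := (m_in m)(X := True),
                     m_index := (m_index m)(X := (m_index m X)(Suc d := True)),
                     m_depth := (m_depth m)(d := False, Suc d := True),
                     m_c := (m_c m)(d := m_c m d + 1, Suc d := 0) \<rparr>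
    | Pop X d \<Rightarrow> m\<lparr> m_in := (m_in m)(X := False),
                    m_index := (m_index m)(X := (m_index m X)(d := False)),
                    m_depth := (m_depth m)(d := False, d - 1 := True) \<rparr>
    | Move \<Rightarrow> m\<lparr> m_cT := m_cT m + 1 \<rparr>
    | Op a \<Rightarrow> m
    | OpDec a X d \<Rightarrow> m\<lparr> m_c := (\<lambda>d'. if d \<le> d' \<and> d' \<le> nV Q then 0 else m_c m d') \<rparr>)"

definition op_bool :: "('f, 'v, 'a) qnp \<Rightarrow> 'a \<Rightarrow> ('f, 'v) bstate \<Rightarrow> ('f, 'v) bstate" where
  "op_bool Q a bs = (\<lambda>z. case z of
      PA p \<Rightarrow> apply_peff (Qeff Q a) p (bs z)
    | ZA Y \<Rightarrow> (if Y \<in> Qinc Q a then False else bs z))"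

text \<open>Successor states in T(Q); for a(X,d) the atoms Z=0 with Dec(Z) in N(a) are
  set nondeterministically.\<close>
definition tsucc :: "('f, 'v, 'a) qnp \<Rightarrow> ('v, 'a) tact \<Rightarrow> ('f, 'v) tstate \<Rightarrow> ('f, 'v) tstate set" where
  "tsucc Q b t = (case b of
      Op a \<Rightarrow> {(op_bool Q a (fst t), mem_eff Q b (snd t))}
    | OpDec a X d \<Rightarrow> {(bs', mem_eff Q b (snd t)) | bs'.
          \<forall>z. (\<forall>Z \<in> Qdec Q a. z \<noteq> ZA Z) \<longrightarrow> bs' z = op_bool Q a (fst t) z}
    | _ \<Rightarrow> {(fst t, mem_eff Q b (snd t))})"

definition tinit :: "('f, 'v, 'a) qnp \<Rightarrow> ('f, 'v) tstate" where
  "tinit Q = (init_b Q, m0)"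

definition tgoal :: "('f, 'v, 'a) qnp \<Rightarrow> ('f, 'v) tstate \<Rightarrow> bool" where
  "tgoal Q t \<longleftrightarrow> (\<forall>l \<in> QG Q. lit_holds (fst t) l)"

type_synonym ('f, 'v, 'a) policy = "('f, 'v) tstate \<Rightarrow> ('v, 'a) tact option"

inductive treach :: "('f, 'v, 'a) qnp \<Rightarrow> ('f, 'v, 'a) policy \<Rightarrow> ('f, 'v) tstate \<Rightarrow> ('f, 'v) tstate \<Rightarrow> bool"
  for Q \<pi> where
  refl: "treach Q \<pi> t t"
| step: "\<lbrakk> treach Q \<pi> t t'; \<not> tgoal Q t'; \<pi> t' = Some b; tact_valid Q b; tpre Q b t';
           t'' \<in> tsucc Q b t' \<rbrakk> \<Longrightarrow> treach Q \<pi> t t''"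

definition strong_cyclic :: "('f, 'v, 'a) qnp \<Rightarrow> ('f, 'v, 'a) policy \<Rightarrow> bool" where
  "strong_cyclic Q \<pi> \<longleftrightarrow>
     (\<forall>t. treach Q \<pi> (tinit Q) t \<longrightarrow> (\<exists>g. treach Q \<pi> t g \<and> tgoal Q g))"

section \<open>The controller \<pi>_M on Q\<close>

definition eps_ok :: "real \<Rightarrow> ('f, 'v) qstate \<Rightarrow> ('f, 'v) qstate \<Rightarrow> bool" where
  "eps_ok \<epsilon> s s' \<longleftrightarrow> (\<forall>X. qn s' X \<noteq> qn s X \<longrightarrow>
      (\<bar>qn s' X - qn s X\<bar> \<ge> \<epsilon> \<or> (qn s X < \<epsilon> \<and> qn s' X = 0)))"

definition ctrl_enabled :: "('f, 'v, 'a) qnp \<Rightarrow> ('f, 'v, 'a) policy \<Rightarrow> ('f, 'v) qstate \<times> 'v mem \<Rightarrow> bool" where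
  "ctrl_enabled Q \<pi> x \<longleftrightarrow> (\<exists>b. \<pi> (bar (fst x), snd x) = Some b \<and> tact_valid Q b
                               \<and> tpre Q b (bar (fst x), snd x))"

definition cstep :: "('f, 'v, 'a) qnp \<Rightarrow> ('f, 'v, 'a) policy \<Rightarrow> real
    \<Rightarrow> ('f, 'v) qstate \<times> 'v mem \<Rightarrow> ('f, 'v) qstate \<times> 'v mem \<Rightarrow> bool" where
  "cstep Q \<pi> \<epsilon> x x' \<longleftrightarrow> (\<exists>b. \<pi> (bar (fst x), snd x) = Some b \<and> tact_valid Q b
      \<and> tpre Q b (bar (fst x), snd x)
      \<and> snd x' = mem_eff Q b (snd x)
      \<and> (case b of
           Op a \<Rightarrow> fst x' \<in> qsucc Q a (fst x)
         | OpDec a X d \<Rightarrow> fst x' \<in> qsucc Q a (fst x)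
         | _ \<Rightarrow> fst x' = fst x)
      \<and> eps_ok \<epsilon> (fst x) (fst x'))"

definition max_fin_exec :: "('f, 'v, 'a) qnp \<Rightarrow> ('f, 'v, 'a) policy \<Rightarrow> real
    \<Rightarrow> (('f, 'v) qstate \<times> 'v mem) list \<Rightarrow> bool" where
  "max_fin_exec Q \<pi> \<epsilon> xs \<longleftrightarrow> xs \<noteq> [] \<and> qinit Q (fst (hd xs)) \<and> snd (hd xs) = m0
     \<and> (\<forall>i. Suc i < length xs \<longrightarrow> cstep Q \<pi> \<epsilon> (xs ! i) (xs ! Suc i))
     \<and> ((qgoal Q (fst (last xs)) \<and> (\<forall>i. Suc i < length xs \<longrightarrow> \<not> qgoal Q (fst (xs ! i))))
        \<or> \<not> ctrl_enabled Q \<pi> (last xs))"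

definition max_inf_exec :: "('f, 'v, 'a) qnp \<Rightarrow> ('f, 'v, 'a) policy \<Rightarrow> real
    \<Rightarrow> (nat \<Rightarrow> ('f, 'v) qstate \<times> 'v mem) \<Rightarrow> bool" where
  "max_inf_exec Q \<pi> \<epsilon> f \<longleftrightarrow> qinit Q (fst (f 0)) \<and> snd (f 0) = m0
     \<and> (\<forall>i. cstep Q \<pi> \<epsilon> (f i) (f (Suc i)))
     \<and> (\<forall>i. \<not> qgoal Q (fst (f i)))"

definition controller_solves :: "('f, 'v, 'a) qnp \<Rightarrow> ('f, 'v, 'a) policy \<Rightarrow> bool" where
  "controller_solves Q \<pi> \<longleftrightarrow> (\<forall>\<epsilon>::real. \<epsilon> > 0 \<longrightarrow>
      (\<forall>xs. max_fin_exec Q \<pi> \<epsilon> xs \<longrightarrow> (\<exists>x \<in> set xs. qgoal Q (fst x)))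
    \<and> (\<forall>f. max_inf_exec Q \<pi> \<epsilon> f \<longrightarrow> (\<exists>i. qgoal Q (fst (f i)))))"

end

theory Submission imports Defs "HOL-Library.Infinite_Set" begin

definition tst :: "('f,'v) qstate \<times> 'v mem \<Rightarrow> ('f,'v) tstate" where
  "tst x = (bar (fst x), snd x)"

lemma cstep_D:
  assumes "cstep Q \<pi> \<epsilon> x x'"
  shows "\<pi> (tst x) = Some (the (\<pi> (tst x))) \<and> tact_valid Q (the (\<pi> (tst x)))
    \<and> tpre Q (the (\<pi> (tst x))) (tst x) \<and> snd x' = mem_eff Q (the (\<pi> (tst x))) (snd x)
    \<and> (case the (\<pi> (tst x)) of Op a \<Rightarrow> fst x' \<in> qsucc Q a (fst x)
         | OpDec a X d \<Rightarrow> fst x' \<in> qsucc Q a (fst x)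
         | _ \<Rightarrow> fst x' = fst x)
    \<and> eps_ok \<epsilon> (fst x) (fst x')"
  using assms unfolding cstep_def tst_def by auto

lemma qsucc_ok: "s' \<in> qsucc Q a s \<Longrightarrow> qstate_ok s'"
  by (simp add: qsucc_def)

lemma cstep_ok:
  assumes "cstep Q \<pi> \<epsilon> x x'" "qstate_ok (fst x)"
  shows "qstate_ok (fst x')"
  using cstep_D[OF assms(1)] assms(2)
  by (cases "the (\<pi> (tst x))") (auto dest: qsucc_ok)

lemma qsucc_bar:
  assumes "s' \<in> qsucc Q a s" "qstate_ok s"
    "\<forall>Z \<in> Qdec Q a. z \<noteq> ZA Z"
  shows "bar s' z = op_bool Q a (bar s) z"
proof (cases z)
  case (PA p)
  then show ?thesis using assms(1) by (simp add: qsucc_def bar_def op_bool_def)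
next
  case (ZA Y)
  have "Y \<notin> Qdec Q a" using assms(3) ZA by auto
  moreover have "0 \<le> qn s Y" using assms(2) by (simp add: qstate_ok_def)
  ultimately show ?thesis using assms(1) ZA
    by (auto simp add: qsucc_def bar_def op_bool_def)
qed

lemma cstep_tsucc:
  assumes "cstep Q \<pi> \<epsilon> x x'" "qstate_ok (fst x)"
  shows "tst x' \<in> tsucc Q (the (\<pi> (tst x))) (tst x)"
proof -
  note D = cstep_D[OF assms(1)]
  show ?thesis
  proof (cases "the (\<pi> (tst x))")
    case (Op a)
    then have v: "Qdec Q a = {}" and q: "fst x' \<in> qsucc Q a (fst x)" using D by (auto simp: tact_valid_def)
    have "bar (fst x') = op_bool Q a (bar (fst x))"
      using qsucc_bar[OF q assms(2)] v by auto
    then show ?thesis using Op D by (simp add: tsucc_def tst_def)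
  next
    case (OpDec a X d)
    then have q: "fst x' \<in> qsucc Q a (fst x)" using D by auto
    show ?thesis using OpDec D qsucc_bar[OF q assms(2)] by (auto simp add: tsucc_def tst_def)
  qed (use D in \<open>auto simp: tsucc_def tst_def\<close>)
qed

lemma tgoal_tst: "tgoal Q (tst x) = qgoal Q (fst x)"
  by (simp add: tgoal_def qgoal_def tst_def)

lemma treach_enabled:
  assumes "treach Q \<pi> t g"
  shows "t = g \<or> (\<exists>b. \<pi> t = Some b \<and> tact_valid Q b \<and> tpre Q b t)"
  using assms by induction auto


definition minv :: "'v mem \<Rightarrow> bool" where
  "minv m \<longleftrightarrow> (\<forall>x y. m_depth m x \<longrightarrow> m_depth m y \<longrightarrow> x = y)
     \<and> (\<forall>X d. m_index m X d \<longrightarrow> m_in m X)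
     \<and> (\<forall>X d d'. m_index m X d \<longrightarrow> m_index m X d' \<longrightarrow> d = d')"

lemma minv_m0: "minv m0" by (simp add: minv_def m0_def)

lemma minv_step:
  assumes "minv m" "tact_valid Q b" "tpre Q b (bs, m)"
  shows "minv (mem_eff Q b m)"
proof (cases b)
  case (Push X d)
  have i1: "\<forall>x y. m_depth m x \<longrightarrow> m_depth m y \<longrightarrow> x = y"
    and i2: "\<forall>X d. m_index m X d \<longrightarrow> m_in m X"
    and i3: "\<forall>X d d'. m_index m X d \<longrightarrow> m_index m X d' \<longrightarrow> d = d'"
    using assms(1) by (auto simp: minv_def)
  have p: "\<not> m_in m X" "m_depth m d" using assms(3) Push by (auto simp: tpre_def)
  show ?thesis unfolding minv_def mem_eff_def Push
    using i1 i2 i3 p by auto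
next
  case (Pop X d)
  have i1: "\<forall>x y. m_depth m x \<longrightarrow> m_depth m y \<longrightarrow> x = y"
    and i2: "\<forall>X d. m_index m X d \<longrightarrow> m_in m X"
    and i3: "\<forall>X d d'. m_index m X d \<longrightarrow> m_index m X d' \<longrightarrow> d = d'"
    using assms(1) by (auto simp: minv_def)
  have p: "m_in m X" "m_index m X d" "m_depth m d" "1 \<le> d"
    using assms(2,3) Pop by (auto simp: tpre_def tact_valid_def)
  let ?m = "mem_eff Q b m"
  have a1: "m_depth ?m x \<Longrightarrow> m_depth ?m y \<Longrightarrow> x = y" for x y
  proof -
    assume h: "m_depth ?m x" "m_depth ?m y"
    have "x = d - 1"
    proof (rule ccontr)
      assume "x \<noteq> d - 1"
      then have "m_depth m x" "x \<noteq> d" using h(1) by (auto simp: mem_eff_def Pop split: if_splits)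
      then show False using i1 p(3) by blast
    qed
    moreover have "y = d - 1"
    proof (rule ccontr)
      assume "y \<noteq> d - 1"
      then have "m_depth m y" "y \<noteq> d" using h(2) by (auto simp: mem_eff_def Pop split: if_splits)
      then show False using i1 p(3) by blast
    qed
    ultimately show ?thesis by simp
  qed
  have a2: "m_index ?m Y e \<Longrightarrow> m_in ?m Y" for Y e
  proof -
    assume h: "m_index ?m Y e"
    show ?thesis
    proof (cases "Y = X")
      case True
      then have "m_index m X e" "e \<noteq> d" using h by (auto simp: mem_eff_def Pop split: if_splits)
      then show ?thesis using i3 p(2) by blast
    next
      case False
      then show ?thesis using h i2 by (auto simp: mem_eff_def Pop)
    qed
  qed
  have a3: "m_index ?m Y e \<Longrightarrow> m_index ?m Y e' \<Longrightarrow> e = e'" for Y e e'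
  proof -
    assume "m_index ?m Y e" "m_index ?m Y e'"
    then have "m_index m Y e" "m_index m Y e'" by (auto simp: mem_eff_def Pop split: if_splits)
    then show ?thesis using i3 by blast
  qed
  show ?thesis unfolding minv_def using a1 a2 a3 by blast
qed (use assms(1) in \<open>auto simp: minv_def mem_eff_def\<close>)

lemma cstep_minv:
  assumes "cstep Q \<pi> \<epsilon> x x'" "minv (snd x)"
  shows "minv (snd x')"
  using cstep_D[OF assms(1)] minv_step[OF assms(2)] unfolding tst_def by auto

lemma mono_chain:
  fixes g :: "nat \<Rightarrow> real"
  assumes "\<forall>t\<ge>T. g (Suc t) \<le> g t" "T \<le> a" "a \<le> b"
  shows "g b \<le> g a"
  using assms(3)
proof (induction b)
  case 0 then show ?case by simp
next
  case (Suc b)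
  show ?case
  proof (cases "a = Suc b")
    case False
    then have "a \<le> b" using Suc by simp
    then have "g b \<le> g a" using Suc by simp
    moreover have "g (Suc b) \<le> g b" using assms(1) \<open>a \<le> b\<close> assms(2) by simp
    ultimately show ?thesis by simp
  qed simp
qed

lemma finite_dec:
  fixes g :: "nat \<Rightarrow> real"
  assumes e: "\<epsilon> > 0" and m: "\<forall>t\<ge>T. g (Suc t) \<le> g t"
    and d: "\<forall>t\<ge>T. P t \<longrightarrow> g (Suc t) \<le> g t - \<epsilon>"
    and b: "\<forall>t\<ge>T. P t \<longrightarrow> g t \<ge> B"
  shows "\<exists>T'. \<forall>t\<ge>T'. \<not> P t"
proof (rule ccontr)
  assume nt: "\<not> (\<exists>T'. \<forall>t\<ge>T'. \<not> P t)"
  have inf: "infinite {t. t \<ge> T \<and> P t}"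
  proof
    assume "finite {t. t \<ge> T \<and> P t}"
    then obtain N where N: "\<forall>t\<in>{t. t \<ge> T \<and> P t}. t \<le> N"
      using finite_nat_set_iff_bounded_le by blast
    have "\<forall>t\<ge>max T (Suc N). \<not> P t" using N by fastforce
    then show False using nt by blast
  qed
  define S where "S = {t. t \<ge> T \<and> P t}"
  have S: "infinite S" using inf S_def by simp
  have ink: "Infinite_Set.enumerate S k \<in> S" for k using enumerate_in_set[OF S] .
  have key: "g (Infinite_Set.enumerate S k) \<le> g T - real k * \<epsilon>" for k
  proof (induction k)
    case 0
    have "T \<le> Infinite_Set.enumerate S 0" using ink[of 0] S_def by simp
    then show ?case using mono_chain[OF m, of T "Infinite_Set.enumerate S 0"] by simp
  next
    case (Suc k)
    let ?a = "Infinite_Set.enumerate S k"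
    have a: "T \<le> ?a" "P ?a" using ink[of k] S_def by auto
    have "Suc ?a \<le> Infinite_Set.enumerate S (Suc k)" using enumerate_step[OF S, of k] by simp
    then have "g (Infinite_Set.enumerate S (Suc k)) \<le> g (Suc ?a)" using mono_chain[OF m, of "Suc ?a"] a by simp
    also have "\<dots> \<le> g ?a - \<epsilon>" using d a by simp
    finally show ?case using Suc by (simp add: algebra_simps)
  qed
  obtain k :: nat where k: "real k > (g T - B) / \<epsilon>" using reals_Archimedean2 by blast
  have "B \<le> g (Infinite_Set.enumerate S k)" using b ink[of k] S_def by simp
  also have "\<dots> \<le> g T - real k * \<epsilon>" by (rule key)
  finally have "real k * \<epsilon> \<le> g T - B" by simp
  then have "real k \<le> (g T - B) / \<epsilon>" using e by (simp add: field_simps)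
  then show False using k by simp
qed


lemma wf_dec:
  assumes "wf_qnp Q" "a \<in> QO Q" "X \<in> Qdec Q a"
  shows "(ZA X, False) \<in> Qpre Q a" "X \<in> QV Q"
  using assms unfolding wf_qnp_def by blast+

lemma tsucc_det:
  assumes "\<And>a X d. b \<noteq> OpDec a X d" "x \<in> tsucc Q b t" "y \<in> tsucc Q b t"
  shows "x = y"
  using assms by (cases b) (auto simp: tsucc_def)

lemma ev_finite:
  assumes "finite A" "\<forall>x\<in>A. \<exists>T. \<forall>t\<ge>T. P x (t::nat)"
  shows "\<exists>T. \<forall>x\<in>A. \<forall>t\<ge>T. P x t"
  using assms
proof (induction A rule: finite_induct)
  case empty then show ?case by simp
next
  case (insert y F)
  then obtain T1 where T1: "\<forall>x\<in>F. \<forall>t\<ge>T1. P x t" by auto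
  obtain T2 where T2: "\<forall>t\<ge>T2. P y t" using insert.prems by auto
  have "\<forall>x\<in>insert y F. \<forall>t\<ge>max T1 T2. P x t" using T1 T2 by auto
  then show ?case by blast
qed

definition pushlt :: "nat \<Rightarrow> ('v,'a) tact \<Rightarrow> bool" where
  "pushlt d b \<longleftrightarrow> (\<exists>X d''. b = Push X d'' \<and> d'' < d)"
definition pople :: "nat \<Rightarrow> ('v,'a) tact \<Rightarrow> bool" where
  "pople d b \<longleftrightarrow> (\<exists>X d''. b = Pop X d'' \<and> d'' \<le> d)"

locale infex =
  fixes Q :: "('f, 'v, 'a) qnp" and \<pi> :: "('f, 'v, 'a) policy" and \<epsilon> :: real
    and f :: "nat \<Rightarrow> ('f, 'v) qstate \<times> 'v mem"
  assumes wf: "wf_qnp Q" and epos: "\<epsilon> > 0" and ex: "max_inf_exec Q \<pi> \<epsilon> f"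
begin

definition b :: "nat \<Rightarrow> ('v,'a) tact" where "b t = the (\<pi> (tst (f t)))"
abbreviation m :: "nat \<Rightarrow> 'v mem" where "m t \<equiv> snd (f t)"
abbreviation s :: "nat \<Rightarrow> ('f,'v) qstate" where "s t \<equiv> fst (f t)"

lemma cs: "cstep Q \<pi> \<epsilon> (f t) (f (Suc t))" using ex by (simp add: max_inf_exec_def)

lemma D: "\<pi> (tst (f t)) = Some (b t) \<and> tact_valid Q (b t)
    \<and> tpre Q (b t) (tst (f t)) \<and> m (Suc t) = mem_eff Q (b t) (m t)
    \<and> (case b t of Op a \<Rightarrow> s (Suc t) \<in> qsucc Q a (s t)
         | OpDec a X d \<Rightarrow> s (Suc t) \<in> qsucc Q a (s t)
         | _ \<Rightarrow> s (Suc t) = s t)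
    \<and> eps_ok \<epsilon> (s t) (s (Suc t))"
  using cstep_D[OF cs[of t]] unfolding b_def by simp

lemma ok: "qstate_ok (s t)"
proof (induction t)
  case 0 then show ?case using ex by (simp add: max_inf_exec_def qinit_def)
next
  case (Suc t) then show ?case using cstep_ok[OF cs] by blast
qed

lemma inv: "minv (m t)"
proof (induction t)
  case 0 then show ?case using ex minv_m0 by (simp add: max_inf_exec_def)
next
  case (Suc t) then show ?case using cstep_minv[OF cs] by blast
qed

lemma nogoal: "\<not> qgoal Q (s t)" using ex by (simp add: max_inf_exec_def)

lemma reach: "treach Q \<pi> (tinit Q) (tst (f k))"
proof (induction k)
  case 0
  have "tst (f 0) = tinit Q" using ex
    by (simp add: max_inf_exec_def qinit_def tst_def tinit_def)
  then show ?case using treach.refl by metis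
next
  case (Suc k)
  show ?case
    apply (rule treach.step[OF Suc])
    using nogoal[of k] tgoal_tst[of Q "f k"] D[of k] cstep_tsucc[OF cs ok] by (auto simp: b_def)
qed


lemma frozen:
  assumes H: "\<forall>t\<ge>T. \<not> pushlt d (b t) \<and> \<not> pople d (b t)" and "d' \<le> d" "T \<le> t"
  shows "m_index (m t) X d' = m_index (m T) X d'"
  using assms(3)
proof (induction t rule: dec_induct)
  case base then show ?case by simp
next
  case (step t)
  have h: "\<not> pushlt d (b t)" "\<not> pople d (b t)" using H step.hyps(1) by auto
  have "m_index (m (Suc t)) X d' = m_index (m t) X d'"
  proof (cases "b t")
    case (Push Y e)
    then have "\<not> e < d" using h(1) by (auto simp: pushlt_def)
    then show ?thesis using D[of t] Push \<open>d' \<le> d\<close> by (auto simp: mem_eff_def)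
  next
    case (Pop Y e)
    then have "\<not> e \<le> d" using h(2) by (auto simp: pople_def)
    then show ?thesis using D[of t] Pop \<open>d' \<le> d\<close> by (auto simp: mem_eff_def)
  qed (use D[of t] in \<open>auto simp: mem_eff_def\<close>)
  then show ?case using step.IH by simp
qed

lemma nonincr:
  assumes "m_in (m t) X"
  shows "qn (s (Suc t)) X \<le> qn (s t) X"
proof (cases "b t")
  case (Op a)
  then have q: "s (Suc t) \<in> qsucc Q a (s t)" and ni: "X \<notin> Qinc Q a"
    using D[of t] assms by (auto simp: tpre_def tst_def Let_def)
  then show ?thesis by (cases "X \<in> Qdec Q a") (auto simp: qsucc_def)
next
  case (OpDec a Y e)
  then have q: "s (Suc t) \<in> qsucc Q a (s t)" and ni: "X \<notin> Qinc Q a"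
    using D[of t] assms by (auto simp: tpre_def tst_def Let_def)
  then show ?thesis by (cases "X \<in> Qdec Q a") (auto simp: qsucc_def)
qed (use D[of t] in auto)

lemma decr:
  assumes "b t = OpDec a X e"
  shows "qn (s t) X \<noteq> 0" "qn (s (Suc t)) X < qn (s t) X"
    "qn (s t) X - qn (s (Suc t)) X \<ge> \<epsilon> \<or> qn (s (Suc t)) X = 0"
proof -
  have v: "a \<in> QO Q" "X \<in> Qdec Q a" using D[of t] assms by (auto simp: tact_valid_def)
  have "(ZA X, False) \<in> Qpre Q a" using wf_dec[OF wf v] by simp
  moreover have "\<forall>l\<in>Qpre Q a. lit_holds (bar (s t)) l" using D[of t] assms by (auto simp: tpre_def tst_def Let_def)
  ultimately have "lit_holds (bar (s t)) (ZA X, False)" by blast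
  then show "qn (s t) X \<noteq> 0" by (simp add: lit_holds_def bar_def)
  have q: "s (Suc t) \<in> qsucc Q a (s t)" using D[of t] assms by auto
  then show lt: "qn (s (Suc t)) X < qn (s t) X" using v by (auto simp: qsucc_def)
  have e: "eps_ok \<epsilon> (s t) (s (Suc t))" using D[of t] by blast
  have "qn (s (Suc t)) X \<noteq> qn (s t) X" using lt by simp
  then have "\<bar>qn (s (Suc t)) X - qn (s t) X\<bar> \<ge> \<epsilon> \<or> (qn (s t) X < \<epsilon> \<and> qn (s (Suc t)) X = 0)"
    using e unfolding eps_ok_def by blast
  then show "qn (s t) X - qn (s (Suc t)) X \<ge> \<epsilon> \<or> qn (s (Suc t)) X = 0"
    using lt by (auto simp: abs_if split: if_splits)
qed

lemma fin_pair:
  assumes H: "\<forall>t\<ge>T. \<not> pushlt d (b t) \<and> \<not> pople d (b t)" and "d' \<le> d"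
  shows "\<exists>T'. \<forall>t\<ge>T'. \<not> (\<exists>a. b t = OpDec a X d')"
proof (cases "\<exists>t0\<ge>T. \<exists>a. b t0 = OpDec a X d'")
  case False then show ?thesis by blast
next
  case True
  then obtain t0 a0 where t0: "t0 \<ge> T" "b t0 = OpDec a0 X d'" by blast
  then have "m_index (m t0) X d'" using D[of t0] by (auto simp: tpre_def tst_def Let_def)
  then have idx: "m_index (m T) X d'" using frozen[OF H \<open>d' \<le> d\<close> t0(1)] by simp
  have inn: "m_in (m t) X" if "t \<ge> T" for t
  proof -
    have "m_index (m t) X d'" using idx frozen[OF H \<open>d' \<le> d\<close> that] by simp
    then show ?thesis using inv[of t] by (auto simp: minv_def)
  qed
  define g where "g t = (if qn (s t) X = 0 then 0 else qn (s t) X + \<epsilon>)" for t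
  have nn: "qn (s t) X \<ge> 0" for t using ok[of t] by (simp add: qstate_ok_def)
  have g0: "g t \<ge> 0" for t using nn[of t] epos by (simp add: g_def)
  show ?thesis
  proof (rule finite_dec[OF epos, where g = g and T = T and B = 0])
    show "\<forall>t\<ge>T. g (Suc t) \<le> g t"
    proof (intro allI impI)
      fix t assume "T \<le> t"
      then have "qn (s (Suc t)) X \<le> qn (s t) X" using nonincr inn by blast
      then show "g (Suc t) \<le> g t" using nn[of t] nn[of "Suc t"] g0[of t] unfolding g_def
        by (cases "qn (s (Suc t)) X = 0"; cases "qn (s t) X = 0") simp_all
    qed
    show "\<forall>t\<ge>T. (\<exists>a. b t = OpDec a X d') \<longrightarrow> g (Suc t) \<le> g t - \<epsilon>"
    proof (intro allI impI)
      fix t assume "T \<le> t" "\<exists>a. b t = OpDec a X d'"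
      then obtain a where a: "b t = OpDec a X d'" by blast
      note dd = decr[OF a]
      show "g (Suc t) \<le> g t - \<epsilon>" using dd nn[of t] nn[of "Suc t"] unfolding g_def
        by (cases "qn (s (Suc t)) X = 0") simp_all
    qed
    show "\<forall>t\<ge>T. (\<exists>a. b t = OpDec a X d') \<longrightarrow> 0 \<le> g t" using g0 by blast
  qed
qed

lemma L1:
  assumes H: "\<forall>t\<ge>T. \<not> pushlt d (b t) \<and> \<not> pople d (b t)"
  shows "\<exists>T'. \<forall>t\<ge>T'. \<not> (\<exists>a X d'. b t = OpDec a X d' \<and> d' \<le> d)"
proof -
  have fin: "finite (QV Q \<times> {..d})" using wf by (simp add: wf_qnp_def)
  have "\<forall>p\<in>QV Q \<times> {..d}. \<exists>T'. \<forall>t\<ge>T'. \<not> (\<exists>a. b t = OpDec a (fst p) (snd p))"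
    using fin_pair[OF H] by auto
  from ev_finite[OF fin this] obtain T' where
    T': "\<forall>p\<in>QV Q \<times> {..d}. \<forall>t\<ge>T'. \<not> (\<exists>a. b t = OpDec a (fst p) (snd p))" by blast
  have "\<forall>t\<ge>T'. \<not> (\<exists>a X d'. b t = OpDec a X d' \<and> d' \<le> d)"
  proof (intro allI impI notI)
    fix t assume t: "T' \<le> t" "\<exists>a X d'. b t = OpDec a X d' \<and> d' \<le> d"
    then obtain a X d' where a: "b t = OpDec a X d'" "d' \<le> d" by blast
    have "a \<in> QO Q" "X \<in> Qdec Q a" using D[of t] a by (auto simp: tact_valid_def)
    then have "X \<in> QV Q" using wf_dec[OF wf] by blast
    then show False using T' t(1) a by fastforce
  qed
  then show ?thesis by blast
qed

lemma depth_uniq: "m_depth (m t) x \<Longrightarrow> m_depth (m t) y \<Longrightarrow> x = y"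
  using inv[of t] by (auto simp: minv_def)

lemma Pd: "\<exists>T. \<forall>t\<ge>T. \<not> pushlt d (b t) \<and> \<not> pople d (b t)"
proof (induction d)
  case 0
  have "\<not> pople 0 (b t)" for t using D[of t] by (auto simp: pople_def tact_valid_def)
  then show ?case by (auto simp: pushlt_def)
next
  case (Suc d)
  then obtain T0 where T0: "\<forall>t\<ge>T0. \<not> pushlt d (b t) \<and> \<not> pople d (b t)" by blast
  obtain T1' where T1': "\<forall>t\<ge>T1'. \<not> (\<exists>a X d'. b t = OpDec a X d' \<and> d' \<le> d)"
    using L1[OF T0] by blast
  define T1 where "T1 = max T0 T1'"
  define g where "g t = - real (m_c (m t) d)" for t
  obtain T2' where T2': "\<forall>t\<ge>T2'. \<not> (\<exists>X. b t = Push X d)"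
  proof (rule exE[OF finite_dec[where \<epsilon> = 1 and g = g and T = T1 and B = "- real (Maxc Q)"
          and P = "\<lambda>t. \<exists>X. b t = Push X d"]])
    show "(0::real) < 1" by simp
    have step: "m_c (m (Suc t)) d \<ge> m_c (m t) d \<and>
        ((\<exists>X. b t = Push X d) \<longrightarrow> m_c (m (Suc t)) d = m_c (m t) d + 1 \<and> m_c (m t) d < Maxc Q)"
      if "t \<ge> T1" for t
    proof -
      have h: "\<not> pushlt d (b t)" "\<not> (\<exists>a X d'. b t = OpDec a X d' \<and> d' \<le> d)"
        using T0 T1' that by (auto simp: T1_def)
      show ?thesis
      proof (cases "b t")
        case (Push Y e)
        then have "\<not> e < d" using h(1) by (auto simp: pushlt_def)
        then show ?thesis using D[of t] Push by (auto simp: mem_eff_def tpre_def tst_def Let_def)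
      next
        case (OpDec a Y e)
        then have "\<not> e \<le> d" using h(2) by auto
        then show ?thesis using D[of t] OpDec by (auto simp: mem_eff_def)
      qed (use D[of t] in \<open>auto simp: mem_eff_def\<close>)
    qed
    show "\<forall>t\<ge>T1. g (Suc t) \<le> g t" using step by (auto simp: g_def)
    show "\<forall>t\<ge>T1. (\<exists>X. b t = Push X d) \<longrightarrow> g (Suc t) \<le> g t - 1" using step by (auto simp: g_def)
    show "\<forall>t\<ge>T1. (\<exists>X. b t = Push X d) \<longrightarrow> - real (Maxc Q) \<le> g t" using step by (fastforce simp: g_def)
  qed (use that in blast)
  define T2 where "T2 = max T1 T2'"
  have nopush: "\<not> (\<exists>X e. b t = Push X e \<and> e \<le> d)" if "t \<ge> T2" for t
  proof
    assume "\<exists>X e. b t = Push X e \<and> e \<le> d"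
    then obtain X e where Xe: "b t = Push X e" "e \<le> d" by blast
    have "t \<ge> T0" "t \<ge> T2'" using that by (auto simp: T2_def T1_def)
    show False
    proof (cases "e = d")
      case True then show False using T2' \<open>t \<ge> T2'\<close> Xe by blast
    next
      case False
      then have "pushlt d (b t)" using Xe by (auto simp: pushlt_def)
      then show False using T0 \<open>t \<ge> T0\<close> by blast
    qed
  qed
  obtain T3 where T3: "T3 \<ge> T2" "\<forall>t\<ge>T3. \<not> (\<exists>X. b t = Pop X (Suc d))"
  proof (cases "\<exists>t1\<ge>T2. \<exists>X. b t1 = Pop X (Suc d)")
    case False then show ?thesis using that[of T2] by auto
  next
    case True
    then obtain t1 X1 where t1: "t1 \<ge> T2" "b t1 = Pop X1 (Suc d)" by blast
    have dep: "\<forall>x. m_depth (m t) x \<longrightarrow> x \<le> d" if "t \<ge> Suc t1" for t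
      using that
    proof (induction t rule: dec_induct)
      case base
      have "m_depth (m t1) (Suc d)" using D[of t1] t1 by (auto simp: tpre_def tst_def Let_def)
      then show ?case using D[of t1] t1 depth_uniq[of t1] by (auto simp: mem_eff_def)
    next
      case (step t)
      show ?case
      proof (cases "b t")
        case (Push Y e)
        have "m_depth (m t) e" using D[of t] Push by (auto simp: tpre_def tst_def Let_def)
        then have "e \<le> d" using step.IH by blast
        then show ?thesis using nopush[of t] Push step.hyps t1(1) by auto
      next
        case (Pop Y e)
        have "m_depth (m t) e" using D[of t] Pop by (auto simp: tpre_def tst_def Let_def)
        then have "e \<le> d" using step.IH by blast
        then show ?thesis using D[of t] Pop step.IH by (auto simp: mem_eff_def)
      qed (use D[of t] step.IH in \<open>auto simp: mem_eff_def\<close>)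
    qed
    have "\<forall>t\<ge>Suc t1. \<not> (\<exists>X. b t = Pop X (Suc d))"
    proof (intro allI impI notI)
      fix t assume "Suc t1 \<le> t" "\<exists>X. b t = Pop X (Suc d)"
      then obtain X where "b t = Pop X (Suc d)" by blast
      then have "m_depth (m t) (Suc d)" using D[of t] by (auto simp: tpre_def tst_def Let_def)
      then show False using dep \<open>Suc t1 \<le> t\<close> by fastforce
    qed
    then show ?thesis using that[of "Suc t1"] t1(1) by auto
  qed
  have "\<forall>t\<ge>T3. \<not> pushlt (Suc d) (b t) \<and> \<not> pople (Suc d) (b t)"
  proof (intro allI impI conjI)
    fix t assume t: "T3 \<le> t"
    then show "\<not> pushlt (Suc d) (b t)" using nopush[of t] T3(1) by (auto simp: pushlt_def)
    have "T0 \<le> t" using t T3(1) by (simp add: T2_def T1_def)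
    then show "\<not> pople (Suc d) (b t)" using T0 T3(2) t
      by (auto simp: pople_def, metis le_SucE)
  qed
  then show ?case by blast
qed

lemma noOpDec: "\<exists>T. \<forall>t\<ge>T. \<forall>a X e. b t \<noteq> OpDec a X e"
proof -
  obtain T where "\<forall>t\<ge>T. \<not> pushlt (nV Q) (b t) \<and> \<not> pople (nV Q) (b t)" using Pd by blast
  from L1[OF this] obtain T' where T': "\<forall>t\<ge>T'. \<not> (\<exists>a X d'. b t = OpDec a X d' \<and> d' \<le> nV Q)" by blast
  have "\<forall>t\<ge>T'. \<forall>a X e. b t \<noteq> OpDec a X e"
  proof (intro allI impI notI)
    fix t a X e assume "T' \<le> t" "b t = OpDec a X e"
    moreover then have "e \<le> nV Q" using D[of t] by (auto simp: tact_valid_def)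
    ultimately show False using T' by blast
  qed
  then show ?thesis by blast
qed

lemma contra:
  assumes sc: "strong_cyclic Q \<pi>"
  shows False
proof -
  obtain T where T: "\<forall>t\<ge>T. \<forall>a X e. b t \<noteq> OpDec a X e" using noOpDec by blast
  have cl: "treach Q \<pi> t0 g \<Longrightarrow> \<exists>k\<ge>T. t0 = tst (f k) \<Longrightarrow> \<exists>k\<ge>T. g = tst (f k)" for t0 g
  proof (induction rule: treach.induct)
    case (refl t) then show ?case by simp
  next
    case (step t t' bb t'')
    then obtain k where k: "k \<ge> T" "t' = tst (f k)" by blast
    have "bb = b k" using D[of k] step.hyps(3) k(2) by simp
    have m1: "t'' \<in> tsucc Q (b k) (tst (f k))" using step.hyps(6) k(2) \<open>bb = b k\<close> by simp
    have m2: "tst (f (Suc k)) \<in> tsucc Q (b k) (tst (f k))"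
      using cstep_tsucc[OF cs[of k] ok[of k]] unfolding b_def by simp
    have nd: "\<And>a X e. b k \<noteq> OpDec a X e" using T k(1) by blast
    have "t'' = tst (f (Suc k))" by (rule tsucc_det[OF nd m1 m2])
    moreover have "Suc k \<ge> T" using k(1) by simp
    ultimately show ?case by blast
  qed
  obtain g where g: "treach Q \<pi> (tst (f T)) g" "tgoal Q g"
    using reach[of T] sc unfolding strong_cyclic_def by blast
  then obtain k where "g = tst (f k)" using cl[of "tst (f T)" g] by blast
  then show False using g(2) nogoal[of k] tgoal_tst[of Q "f k"] by simp
qed
end


lemma fin_case:
  assumes sc: "strong_cyclic Q \<pi>" and ex: "max_fin_exec Q \<pi> \<epsilon> xs"
  shows "\<exists>x \<in> set xs. qgoal Q (fst x)"
proof (rule ccontr)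
  assume ng: "\<not> (\<exists>x \<in> set xs. qgoal Q (fst x))"
  have ne: "xs \<noteq> []" and h0: "qinit Q (fst (hd xs))" "snd (hd xs) = m0"
    and cs: "\<And>i. Suc i < length xs \<Longrightarrow> cstep Q \<pi> \<epsilon> (xs ! i) (xs ! Suc i)"
    using ex by (auto simp: max_fin_exec_def)
  have R: "i < length xs \<Longrightarrow> treach Q \<pi> (tinit Q) (tst (xs ! i)) \<and> qstate_ok (fst (xs ! i))" for i
  proof (induction i)
    case 0
    have "tst (xs ! 0) = tinit Q" using h0 ne
      by (simp add: qinit_def tst_def tinit_def hd_conv_nth)
    moreover have "qstate_ok (fst (xs ! 0))" using h0 ne by (simp add: qinit_def hd_conv_nth)
    ultimately show ?case using treach.refl by metis
  next
    case (Suc i)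
    then have IH: "treach Q \<pi> (tinit Q) (tst (xs ! i))" "qstate_ok (fst (xs ! i))" by auto
    have c: "cstep Q \<pi> \<epsilon> (xs ! i) (xs ! Suc i)" using cs Suc.prems by blast
    have "\<not> qgoal Q (fst (xs ! i))" using ng Suc.prems by auto
    then have "\<not> tgoal Q (tst (xs ! i))" using tgoal_tst[of Q "xs ! i"] by simp
    have "treach Q \<pi> (tinit Q) (tst (xs ! Suc i))"
      apply (rule treach.step[OF IH(1) \<open>\<not> tgoal Q (tst (xs ! i))\<close>])
      using cstep_D[OF c] cstep_tsucc[OF c IH(2)] by auto
    then show ?case using cstep_ok[OF c IH(2)] by simp
  qed
  have lst: "last xs = xs ! (length xs - 1)" using ne by (simp add: last_conv_nth)
  have "treach Q \<pi> (tinit Q) (tst (last xs))" using R[of "length xs - 1"] ne lst by simp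
  then obtain g where g: "treach Q \<pi> (tst (last xs)) g" "tgoal Q g" using sc unfolding strong_cyclic_def by blast
  have nl: "\<not> qgoal Q (fst (last xs))" using ng ne by auto
  then have "\<not> tgoal Q (tst (last xs))" using tgoal_tst[of Q "last xs"] by simp
  then have "\<exists>b. \<pi> (tst (last xs)) = Some b \<and> tact_valid Q b \<and> tpre Q b (tst (last xs))"
    using treach_enabled[OF g(1)] g(2) by auto
  then have "ctrl_enabled Q \<pi> (last xs)" by (simp add: ctrl_enabled_def tst_def)
  moreover have "\<not> ctrl_enabled Q \<pi> (last xs)" using ex nl by (auto simp: max_fin_exec_def)
  ultimately show False by simp
qed

theorem theorem13:
  fixes Q :: "('f, 'v, 'a) qnp" and \<pi> :: "('f, 'v, 'a) policy"
  assumes "wf_qnp Q"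
    and "strong_cyclic Q \<pi>"
  shows "controller_solves Q \<pi>"
  unfolding controller_solves_def
proof (intro allI impI conjI)
  fix \<epsilon> :: real and xs assume "\<epsilon> > 0" "max_fin_exec Q \<pi> \<epsilon> xs"
  then show "\<exists>x \<in> set xs. qgoal Q (fst x)" using fin_case assms(2) by blast
next
  fix \<epsilon> :: real and f assume "\<epsilon> > 0" "max_inf_exec Q \<pi> \<epsilon> f"
  then interpret infex Q \<pi> \<epsilon> f using assms(1) by unfold_locales
  show "\<exists>i. qgoal Q (fst (f i))" using contra[OF assms(2)] by blast
qed

end
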